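(* Let $f:\mathbb{R}^n\to\mathbb{R}$ be differentiable with $L$-Lipschitz gradient $\nabla f$. Let $\mathcal{E}^t$ denote the event $\|\nabla f(x^t)\|_\infty\le\eta$. Then the iterate $x^{t+1}$ of Markov gradient descent (MGD) satisfies $$\mathbb{E}\left[f(x^{t+1})\,\middle|\,x^t,\mathcal{E}^t\right]\le f(x^t)+\frac{L\alpha^2}{2\eta}\|\nabla f(x^t)\|_1-\frac{\alpha}{\eta}\|\nabla f(x^t)\|_2^2 .$$
   Context: Markov gradient descent (MGD) with lattice resolution $\alpha>0$ and normalizer $\eta>0$: start at $x^0\in\alpha\mathbb{Z}^n$; at step $t$, for each coordinate $i$, conditionally on $x^t$, $\Delta^t_i\in\{0,1\}$ is Bernoulli with $\mathbb{P}[\Delta^t_i=1\mid x^t]=\min(|\partial_i f(x^t)|/\eta,1)$, and $x^{t+1}_i=x^t_i-\alpha\,\mathrm{sgn}(\partial_i f(x^t))\Delta^t_i$. (This is stochastic Markov gradient descent with the deterministic gradient estimator $G=\nabla f$.) *)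

theory Defs
  imports "HOL-Analysis.Analysis" "HOL-Probability.Probability"
begin

definition norm_inf :: "real ^ 'n \<Rightarrow> real" where
  "norm_inf v = Max (range (\<lambda>i. \<bar>v $ i\<bar>))"

definition norm_one :: "real ^ 'n \<Rightarrow> real" where
  "norm_one v = (\<Sum>i\<in>UNIV. \<bar>v $ i\<bar>)"

definition on_lattice :: "real \<Rightarrow> real ^ 'n \<Rightarrow> bool" where
  "on_lattice \<alpha> x \<longleftrightarrow> (\<forall>i. \<exists>k::int. x $ i = \<alpha> * of_int k)"

definition mgd_increments :: "real \<Rightarrow> real ^ 'n \<Rightarrow> ('n \<Rightarrow> bool) pmf" where
  "mgd_increments \<eta> g = Pi_pmf UNIV False (\<lambda>i. bernoulli_pmf (min (\<bar>g $ i\<bar> / \<eta>) 1))"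

definition mgd_step :: "real \<Rightarrow> real ^ 'n \<Rightarrow> real ^ 'n \<Rightarrow> ('n \<Rightarrow> bool) \<Rightarrow> real ^ 'n" where
  "mgd_step \<alpha> x g \<Delta> = (\<chi> i. x $ i - \<alpha> * sgn (g $ i) * (if \<Delta> i then 1 else 0))"

end

theory Submission imports Defs begin

lemma descent:
  fixes f :: "'a::real_inner \<Rightarrow> real" and G :: "'a \<Rightarrow> 'a"
  assumes grad: "\<And>y. (f has_derivative (\<lambda>h. G y \<bullet> h)) (at y)"
    and lip: "L-lipschitz_on UNIV G"
  shows "f (x + h) \<le> f x + G x \<bullet> h + L / 2 * (norm h)\<^sup>2"
proof -
  define \<phi> where "\<phi> t = f (x + t *\<^sub>R h) - t * (G x \<bullet> h) - L / 2 * t\<^sup>2 * (norm h)\<^sup>2" for t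
  have L0: "L \<ge> 0" using lip by (simp add: lipschitz_on_def)
  have "\<phi> 1 \<le> \<phi> 0"
  proof (rule DERIV_nonpos_imp_nonincreasing[of 0 1])
    fix t :: real assume t: "0 \<le> t" "t \<le> 1"
    have d1: "((\<lambda>t. f (x + t *\<^sub>R h)) has_derivative (\<lambda>s. G (x + t *\<^sub>R h) \<bullet> (s *\<^sub>R h))) (at t)"
    proof (rule has_derivative_compose[OF _ grad])
      show "((\<lambda>t. x + t *\<^sub>R h) has_derivative (\<lambda>s. s *\<^sub>R h)) (at t)"
        by (auto intro!: derivative_eq_intros)
    qed
    have "((\<lambda>t. f (x + t *\<^sub>R h)) has_real_derivative (G (x + t *\<^sub>R h) \<bullet> h)) (at t)"
    proof -
      have "(\<lambda>s. G (x + t *\<^sub>R h) \<bullet> (s *\<^sub>R h)) = (\<lambda>s. (G (x + t *\<^sub>R h) \<bullet> h) * s)"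
        by (auto simp: mult.commute)
      with d1 show ?thesis by (simp add: has_field_derivative_def)
    qed
    then have "(\<phi> has_real_derivative (G (x + t *\<^sub>R h) \<bullet> h - G x \<bullet> h - L * t * (norm h)\<^sup>2)) (at t)"
      unfolding \<phi>_def by (auto intro!: derivative_eq_intros)
    moreover have "G (x + t *\<^sub>R h) \<bullet> h - G x \<bullet> h - L * t * (norm h)\<^sup>2 \<le> 0"
    proof -
      have "G (x + t *\<^sub>R h) \<bullet> h - G x \<bullet> h = (G (x + t *\<^sub>R h) - G x) \<bullet> h" by (simp add: inner_diff_left)
      also have "\<dots> \<le> norm (G (x + t *\<^sub>R h) - G x) * norm h" by (rule norm_cauchy_schwarz)
      also have "norm (G (x + t *\<^sub>R h) - G x) \<le> L * norm (t *\<^sub>R h)"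
        using lip unfolding lipschitz_on_def dist_norm by (metis UNIV_I add_diff_cancel_left')
      hence "norm (G (x + t *\<^sub>R h) - G x) * norm h \<le> L * norm (t *\<^sub>R h) * norm h"
        by (simp add: mult_right_mono)
      also have "\<dots> = L * t * (norm h)\<^sup>2" using t by (simp add: power2_eq_square)
      finally show ?thesis by simp
    qed
    ultimately show "\<exists>y. (\<phi> has_real_derivative y) (at t) \<and> y \<le> 0" by blast
  qed simp
  thus ?thesis unfolding \<phi>_def by simp
qed

theorem corollary6p1:
  fixes f :: "real ^ 'n \<Rightarrow> real" and G :: "real ^ 'n \<Rightarrow> real ^ 'n"
    and L \<alpha> \<eta> :: real and x :: "real ^ 'n"
  assumes grad: "\<And>y. (f has_derivative (\<lambda>h. G y \<bullet> h)) (at y)"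
    and lip: "L-lipschitz_on UNIV G"
    and alpha: "\<alpha> > 0" and eta: "\<eta> > 0"
    and lattice: "on_lattice \<alpha> x"
    and event: "norm_inf (G x) \<le> \<eta>"
  shows "measure_pmf.expectation (mgd_increments \<eta> (G x)) (\<lambda>\<Delta>. f (mgd_step \<alpha> x (G x) \<Delta>))
         \<le> f x + L * \<alpha>\<^sup>2 / (2 * \<eta>) * norm_one (G x) - \<alpha> / \<eta> * (norm (G x))\<^sup>2"
proof -
  define g where "g = G x"
  define ind where "ind \<Delta> i = (if \<Delta> i then 1 else (0::real))" for \<Delta> :: "'n \<Rightarrow> bool" and i
  define c where "c i = - \<alpha> * \<bar>g $ i\<bar> + L / 2 * \<alpha>\<^sup>2 * (sgn (g $ i))\<^sup>2" for i
  define p where "p i = min (\<bar>g $ i\<bar> / \<eta>) 1" for i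
  have gle: "\<bar>g $ i\<bar> \<le> \<eta>" for i
  proof -
    have "\<bar>g $ i\<bar> \<le> norm_inf g" unfolding norm_inf_def by (rule Max_ge) auto
    thus ?thesis using event g_def by simp
  qed
  have p: "p i = \<bar>g $ i\<bar> / \<eta>" for i using gle[of i] eta by (simp add: p_def)
  have pt: "f (mgd_step \<alpha> x g \<Delta>) \<le> f x + (\<Sum>i\<in>UNIV. c i * ind \<Delta> i)" for \<Delta>
  proof -
    define h where "h = mgd_step \<alpha> x g \<Delta> - x"
    have hi: "h $ i = - \<alpha> * sgn (g $ i) * ind \<Delta> i" for i
      by (simp add: h_def mgd_step_def ind_def)
    have "f (mgd_step \<alpha> x g \<Delta>) = f (x + h)" by (simp add: h_def)
    also have "\<dots> \<le> f x + G x \<bullet> h + L / 2 * (norm h)\<^sup>2" by (rule descent[OF grad lip])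
    also have "G x \<bullet> h = (\<Sum>i\<in>UNIV. - \<alpha> * \<bar>g $ i\<bar> * ind \<Delta> i)"
      unfolding inner_vec_def g_def[symmetric] hi
      by (intro sum.cong refl) (auto simp: sgn_if ind_def)
    also have "(norm h)\<^sup>2 = (\<Sum>i\<in>UNIV. \<alpha>\<^sup>2 * (sgn (g $ i))\<^sup>2 * ind \<Delta> i)"
      unfolding power2_norm_eq_inner inner_vec_def hi
      by (intro sum.cong refl) (auto simp: ind_def power2_eq_square)
    finally show ?thesis
      by (simp add: c_def sum_distrib_left sum.distrib[symmetric] algebra_simps)
  qed
  have Eind: "measure_pmf.expectation (mgd_increments \<eta> g) (\<lambda>\<Delta>. ind \<Delta> i) = p i" for i
  proof -
    have "measure_pmf.expectation (mgd_increments \<eta> g) (\<lambda>\<Delta>. ind \<Delta> i)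
        = measure_pmf.expectation (map_pmf (\<lambda>\<Delta>. \<Delta> i) (mgd_increments \<eta> g)) (\<lambda>b. if b then 1 else 0)"
      by (simp add: ind_def)
    also have "map_pmf (\<lambda>\<Delta>. \<Delta> i) (mgd_increments \<eta> g) = bernoulli_pmf (p i)"
      unfolding mgd_increments_def p_def by (subst Pi_pmf_component) auto
    also have "measure_pmf.expectation (bernoulli_pmf (p i)) (\<lambda>b. if b then 1 else (0::real)) = p i"
      using p[of i] gle[of i] eta by (subst integral_bernoulli_pmf) auto
    finally show ?thesis .
  qed
  have "measure_pmf.expectation (mgd_increments \<eta> g) (\<lambda>\<Delta>. f (mgd_step \<alpha> x g \<Delta>))
      \<le> measure_pmf.expectation (mgd_increments \<eta> g) (\<lambda>\<Delta>. f x + (\<Sum>i\<in>UNIV. c i * ind \<Delta> i))"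
    by (intro integral_mono integrable_measure_pmf_finite pt) auto
  also have "\<dots> = f x + (\<Sum>i\<in>UNIV. c i * p i)"
    by (simp add: integrable_measure_pmf_finite Bochner_Integration.integral_add
          Bochner_Integration.integral_sum Eind)
  also have "(\<Sum>i\<in>UNIV. c i * p i) = L * \<alpha>\<^sup>2 / (2 * \<eta>) * norm_one g - \<alpha> / \<eta> * (norm g)\<^sup>2"
  proof -
    have "c i * p i = L * \<alpha>\<^sup>2 / (2 * \<eta>) * \<bar>g $ i\<bar> - \<alpha> / \<eta> * (g $ i * g $ i)" for i
      unfolding c_def p using eta by (auto simp: sgn_if field_simps power2_eq_square)
    thus ?thesis unfolding norm_one_def power2_norm_eq_inner inner_vec_def
      by (simp add: sum_subtractf sum_distrib_left)
  qed
  finally show ?thesis by (simp add: g_def)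
qed

end
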